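(* Let $\mathfrak{g}$ be a nice nilpotent Lie algebra of dimension $n$ with nice diagram $\Delta$, $m$ arrows, and structure constants $c\in\mathbb{R}^m$, and let $k\in\mathbb{R}$ and $\delta\in(\mathbb{Z}_2)^n$. Then $\mathfrak{g}$ has a diagonal metric $g=\sum_i g_i e^i\otimes e^i$ with $\operatorname{logsign} g=\delta$ whose Ricci operator satisfies $\operatorname{Ric}=\frac12 k\,\mathrm{id}$ if and only if there exists $X\in\mathbb{R}^m$ such that: (K) $M_\Delta^{T}X=[k]$; (H) $X$ does not belong to any coordinate hyperplane, i.e. all entries of $X$ are nonzero; (L) $\operatorname{logsign} X=M_{\Delta,2}\,\delta$; (P) for a basis $\alpha_1,\dots,\alpha_r$ of $\ker M_\Delta^{T}\subset\mathbb{R}^m$, one has $\lvert X\rvert^{\alpha_i}=\lvert c\rvert^{2\alpha_i}$ for $i=1,\dots,r$.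
   Context: A nice basis of a real Lie algebra $\mathfrak{g}$ is a basis $\{e_1,\dots,e_n\}$ with dual basis $\{e^1,\dots,e^n\}$ such that each bracket $[e_i,e_j]$ is a multiple of some $e_h$ and each contraction $e_i\lrcorner\,de^j$ is a multiple of some $e^h$ (here $d$ is the Chevalley–Eilenberg differential, $de^k(x,y)=-e^k([x,y])$); a nice Lie algebra is a Lie algebra with a fixed nice basis. For a nice nilpotent Lie algebra, the nice diagram $\Delta$ has nodes $1,\dots,n$ and an arrow $i\xrightarrow{j}k$ (from $i$ to $k$, labelled by $j$) whenever $e_k$ is a nonzero multiple of $[e_i,e_j]$. Let $\mathcal I_\Delta$ be the set of triples $\{\{i,j\},k\}$ for which $i\xrightarrow{j}k$ is an arrow, $m=\lvert\mathcal I_\Delta\rvert$, ordered lexicographically by $(k,i,j)$ with $i<j$. The structure constants are the vector $c=(c_{ijk})\in\mathbb{R}^m$ (indexed by $\mathcal I_\Delta$, $i<j$) with $de^k=\sum c_{ijk}e^{i}\wedge e^{j}$; all its entries are nonzero. The root matrix $M_\Delta$ is the $m\times n$ integer matrix whose row indexed by $\{\{i,j\},k\}$ has entry $1$ in column $k$, entry $-1$ in columns $i$ and $j$, and $0$ elsewhere; $M_{\Delta,2}\colon(\mathbb{Z}_2)^n\to(\mathbb{Z}_2)^m$ is its reduction mod 2. For $x\in\mathbb{R}\setminus\{0\}$, $\operatorname{logsign}x=0$ if $x>0$ and $1$ if $x<0$; for a vector it is applied componentwise, and for a diagonal metric $\operatorname{logsign} g=(\operatorname{logsign} g_i)_i$.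 A diagonal metric is a nondegenerate (possibly indefinite) scalar product on $\mathfrak{g}$ for which the nice basis is orthogonal; $\operatorname{Ric}$ denotes the Ricci operator of the corresponding left-invariant pseudoriemannian metric. $[k]\in\mathbb{R}^n$ is the vector with all entries $k$. For $X,\alpha\in\mathbb{R}^m$, $\lvert X\rvert^\alpha=\prod_j\lvert x_j\rvert^{\alpha_j}$. *)

theory Defs
  imports Complex_Main
begin

text \<open>Real Lie algebra of dimension n with fixed basis e_1,...,e_n, encoded by its
  structure constants: [e_i,e_j] = sum over h in {1..n} of C i j h e_h.
  Vectors of the Lie algebra are functions nat => real (coordinates w.r.t. the basis,
  only the coordinates 1..n matter).\<close>

type_synonym sconst = "nat \<Rightarrow> nat \<Rightarrow> nat \<Rightarrow> real"
type_synonym triple = "nat \<times> nat \<times> nat"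

definition ev :: "nat \<Rightarrow> nat \<Rightarrow> real" where
  "ev i = (\<lambda>h. if h = i then 1 else 0)"

definition brk :: "nat \<Rightarrow> sconst \<Rightarrow> (nat \<Rightarrow> real) \<Rightarrow> (nat \<Rightarrow> real) \<Rightarrow> nat \<Rightarrow> real" where
  "brk n C u v = (\<lambda>h. \<Sum>i\<in>{1..n}. \<Sum>j\<in>{1..n}. u i * v j * C i j h)"

definition lie_sc :: "nat \<Rightarrow> sconst \<Rightarrow> bool" where
  "lie_sc n C \<longleftrightarrow>
     (\<forall>i j h. (i \<notin> {1..n} \<or> j \<notin> {1..n} \<or> h \<notin> {1..n}) \<longrightarrow> C i j h = 0) \<and>
     (\<forall>i j h. C i j h = - C j i h) \<and>
     (\<forall>i\<in>{1..n}. \<forall>j\<in>{1..n}. \<forall>k\<in>{1..n}. \<forall>h\<in>{1..n}.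
        (\<Sum>l\<in>{1..n}. C i j l * C l k h + C j k l * C l i h + C k i l * C l j h) = 0)"

text \<open>Nice basis: each [e_i,e_j] is a multiple of a single e_h, and each contraction
  e_i \<lrcorner> de^j = - sum_l C i l j e^l is a multiple of a single e^h.\<close>
definition nice_sc :: "nat \<Rightarrow> sconst \<Rightarrow> bool" where
  "nice_sc n C \<longleftrightarrow>
     (\<forall>i\<in>{1..n}. \<forall>j\<in>{1..n}. card {h\<in>{1..n}. C i j h \<noteq> 0} \<le> 1) \<and>
     (\<forall>i\<in>{1..n}. \<forall>j\<in>{1..n}. card {l\<in>{1..n}. C i l j \<noteq> 0} \<le> 1)"

definition nilpotent_sc :: "nat \<Rightarrow> sconst \<Rightarrow> bool" where
  "nilpotent_sc n C \<longleftrightarrow> (\<exists>N. \<forall>is j. length is = N \<longrightarrow> set is \<subseteq> {1..n} \<longrightarrow> j \<in> {1..n} \<longrightarrow>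
       foldr (\<lambda>i v. brk n C (ev i) v) is (ev j) = (\<lambda>_. 0))"

definition nice_nilpotent :: "nat \<Rightarrow> sconst \<Rightarrow> bool" where
  "nice_nilpotent n C \<longleftrightarrow> lie_sc n C \<and> nice_sc n C \<and> nilpotent_sc n C"

text \<open>Nice diagram: arrow i --j--> k iff e_k is a nonzero multiple of [e_i,e_j].\<close>
definition arrow :: "nat \<Rightarrow> sconst \<Rightarrow> nat \<Rightarrow> nat \<Rightarrow> nat \<Rightarrow> bool" where
  "arrow n C i j k \<longleftrightarrow> i \<in> {1..n} \<and> j \<in> {1..n} \<and> k \<in> {1..n} \<and>
     (\<exists>\<mu>. \<mu> \<noteq> 0 \<and> (\<forall>h\<in>{1..n}. ev k h = \<mu> * brk n C (ev i) (ev j) h))"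

text \<open>The index set I_Delta, each element {{i,j},k} represented as (i,j,k) with i<j.
  Vectors in R^m are represented as functions on triples (only values on I_Delta matter).\<close>
definition I_Delta :: "nat \<Rightarrow> sconst \<Rightarrow> triple set" where
  "I_Delta n C = {(i,j,k). i < j \<and> (arrow n C i j k \<or> arrow n C j i k)}"

text \<open>Structure constants c_{ijk} with de^k = sum_{i<j} c_{ijk} e^i \<and> e^j,
  where de^k(x,y) = - e^k([x,y]).\<close>
definition sc_c :: "sconst \<Rightarrow> triple \<Rightarrow> real" where
  "sc_c C t = (case t of (i,j,k) \<Rightarrow> - C i j k)"

definition root_entry :: "triple \<Rightarrow> nat \<Rightarrow> int" where
  "root_entry t l = (case t of (i,j,k) \<Rightarrow>
     (if l = k then 1 else 0) - (if l = i then 1 else 0) - (if l = j then 1 else 0))"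

definition MT :: "nat \<Rightarrow> sconst \<Rightarrow> (triple \<Rightarrow> real) \<Rightarrow> nat \<Rightarrow> real" where
  "MT n C X = (\<lambda>l. \<Sum>t\<in>I_Delta n C. of_int (root_entry t l) * X t)"

text \<open>M_{Delta,2} applied to delta in (Z_2)^n, with Z_2 represented as {0,1} \<subseteq> int.\<close>
definition M2 :: "nat \<Rightarrow> (nat \<Rightarrow> int) \<Rightarrow> triple \<Rightarrow> int" where
  "M2 n \<delta> t = (\<Sum>l\<in>{1..n}. root_entry t l * \<delta> l) mod 2"

definition logsign :: "real \<Rightarrow> int" where
  "logsign x = (if x > 0 then 0 else 1)"

definition in_ker_MT :: "nat \<Rightarrow> sconst \<Rightarrow> (triple \<Rightarrow> real) \<Rightarrow> bool" where
  "in_ker_MT n C \<alpha> \<longleftrightarrow> (\<forall>t. t \<notin> I_Delta n C \<longrightarrow> \<alpha> t = 0) \<and> (\<forall>l\<in>{1..n}. MT n C \<alpha> l = 0)"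

definition ker_basis :: "nat \<Rightarrow> sconst \<Rightarrow> (triple \<Rightarrow> real) list \<Rightarrow> bool" where
  "ker_basis n C as \<longleftrightarrow>
     (\<forall>\<alpha>\<in>set as. in_ker_MT n C \<alpha>) \<and>
     (\<forall>a::nat \<Rightarrow> real. (\<forall>t\<in>I_Delta n C. (\<Sum>q<length as. a q * (as ! q) t) = 0)
         \<longrightarrow> (\<forall>q<length as. a q = 0)) \<and>
     (\<forall>\<beta>. in_ker_MT n C \<beta> \<longrightarrow>
         (\<exists>a::nat \<Rightarrow> real. \<forall>t\<in>I_Delta n C. \<beta> t = (\<Sum>q<length as. a q * (as ! q) t)))"

definition abspow :: "triple set \<Rightarrow> (triple \<Rightarrow> real) \<Rightarrow> (triple \<Rightarrow> real) \<Rightarrow> real" where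
  "abspow I X \<alpha> = (\<Prod>t\<in>I. \<bar>X t\<bar> powr \<alpha> t)"

text \<open>Diagonal metric g = sum g_i e^i \<otimes> e^i, nondegenerate.\<close>
definition diag_metric :: "nat \<Rightarrow> (nat \<Rightarrow> real) \<Rightarrow> bool" where
  "diag_metric n g \<longleftrightarrow> (\<forall>i\<in>{1..n}. g i \<noteq> 0)"

definition gip :: "nat \<Rightarrow> (nat \<Rightarrow> real) \<Rightarrow> (nat \<Rightarrow> real) \<Rightarrow> (nat \<Rightarrow> real) \<Rightarrow> real" where
  "gip n g u v = (\<Sum>i\<in>{1..n}. g i * u i * v i)"

text \<open>Levi-Civita connection on left-invariant vector fields (Koszul formula):
  2 g(nabla_x y, z) = g([x,y],z) - g([y,z],x) + g([z,x],y).\<close>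
definition LC :: "nat \<Rightarrow> sconst \<Rightarrow> (nat \<Rightarrow> real) \<Rightarrow> (nat \<Rightarrow> real) \<Rightarrow> (nat \<Rightarrow> real) \<Rightarrow> nat \<Rightarrow> real" where
  "LC n C g x y = (\<lambda>h. if h \<in> {1..n} then
      (gip n g (brk n C x y) (ev h) - gip n g (brk n C y (ev h)) x + gip n g (brk n C (ev h) x) y)
        / (2 * g h) else 0)"

definition curv :: "nat \<Rightarrow> sconst \<Rightarrow> (nat \<Rightarrow> real) \<Rightarrow> (nat \<Rightarrow> real) \<Rightarrow> (nat \<Rightarrow> real) \<Rightarrow> (nat \<Rightarrow> real) \<Rightarrow> nat \<Rightarrow> real" where
  "curv n C g x y z = (\<lambda>h. LC n C g x (LC n C g y z) h - LC n C g y (LC n C g x z) h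
      - LC n C g (brk n C x y) z h)"

definition ric_tensor :: "nat \<Rightarrow> sconst \<Rightarrow> (nat \<Rightarrow> real) \<Rightarrow> (nat \<Rightarrow> real) \<Rightarrow> (nat \<Rightarrow> real) \<Rightarrow> real" where
  "ric_tensor n C g y z = (\<Sum>l\<in>{1..n}. curv n C g (ev l) y z l)"

text \<open>Ricci operator: g(Ric y, z) = ric(y,z).\<close>
definition ricci_op :: "nat \<Rightarrow> sconst \<Rightarrow> (nat \<Rightarrow> real) \<Rightarrow> (nat \<Rightarrow> real) \<Rightarrow> nat \<Rightarrow> real" where
  "ricci_op n C g y = (\<lambda>h. if h \<in> {1..n} then ric_tensor n C g y (ev h) / g h else 0)"

end

theory Submission
  imports Defs
begin


lemma ev_sum_left:
  assumes "a \<in> A" "finite A"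
  shows "(\<Sum>i\<in>A. ev a i * f i) = f a"
  proof -
  have "(\<Sum>i\<in>A. ev a i * f i) = (\<Sum>i\<in>A. if a = i then f i else 0)"
    by (rule sum.cong) (auto simp: ev_def)
  then show ?thesis using assms by simp
qed

lemma brk_ev_left:
  assumes "a \<in> {1..n}"
  shows "brk n C (ev a) w h = (\<Sum>j\<in>{1..n}. w j * C a j h)"
proof -
  have "brk n C (ev a) w h = (\<Sum>i\<in>{1..n}. ev a i * (\<Sum>j\<in>{1..n}. w j * C i j h))"
    unfolding brk_def by (simp add: sum_distrib_left mult.assoc)
  also have "\<dots> = (\<Sum>j\<in>{1..n}. w j * C a j h)"
    by (rule ev_sum_left[OF assms]) simp
  finally show ?thesis .
qed

lemma brk_ev_right:
  assumes "b \<in> {1..n}"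
  shows "brk n C w (ev b) h = (\<Sum>i\<in>{1..n}. w i * C i b h)"
proof -
  have "brk n C w (ev b) h = (\<Sum>i\<in>{1..n}. w i * (\<Sum>j\<in>{1..n}. ev b j * C i j h))"
    unfolding brk_def by (simp add: sum_distrib_left mult.assoc mult.left_commute)
  also have "\<dots> = (\<Sum>i\<in>{1..n}. w i * C i b h)"
    using ev_sum_left[OF assms] by simp
  finally show ?thesis .
qed

lemma gip_ev:
  assumes "h \<in> {1..n}"
  shows "gip n g w (ev h) = g h * w h"
proof -
  have "gip n g w (ev h) = (\<Sum>i\<in>{1..n}. ev h i * (g i * w i))"
    unfolding gip_def by (simp add: mult.commute mult.left_commute)
  also have "\<dots> = g h * w h" using ev_sum_left[OF assms] by simp
  finally show ?thesis .
qed

definition Gam :: "sconst \<Rightarrow> (nat \<Rightarrow> real) \<Rightarrow> nat \<Rightarrow> nat \<Rightarrow> nat \<Rightarrow> real" where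
  "Gam C g i j h = (g h * C i j h - g i * C j h i + g j * C h i j) / (2 * g h)"

lemma LC_formula:
  assumes h: "h \<in> {1..n}"
  shows "LC n C g x y h = (\<Sum>i\<in>{1..n}. \<Sum>j\<in>{1..n}. x i * y j * Gam C g i j h)"
proof -
  have 1: "gip n g (brk n C x y) (ev h) = (\<Sum>i\<in>{1..n}. \<Sum>j\<in>{1..n}. x i * y j * (g h * C i j h))"
    unfolding gip_ev[OF h] brk_def by (simp add: sum_distrib_left mult_ac)
  have 2: "gip n g (brk n C y (ev h)) x = (\<Sum>i\<in>{1..n}. \<Sum>j\<in>{1..n}. x i * y j * (g i * C j h i))"
    unfolding gip_def brk_ev_right[OF h] by (simp add: sum_distrib_left sum_distrib_right mult_ac)
  have 3: "gip n g (brk n C (ev h) x) y = (\<Sum>i\<in>{1..n}. \<Sum>j\<in>{1..n}. x i * y j * (g j * C h i j))"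
    unfolding gip_def brk_ev_left[OF h] 
    apply (simp add: sum_distrib_left sum_distrib_right mult_ac)
    apply (subst sum.swap) apply simp done
  show ?thesis
    unfolding LC_def using h
    apply (simp add: 1 2 3 Gam_def sum_divide_distrib sum_subtractf[symmetric] sum.distrib[symmetric])
    apply (intro sum.cong refl) apply (simp add: field_simps)
    done
qed

lemma lie_out: "lie_sc n C \<Longrightarrow> C i j h \<noteq> 0 \<Longrightarrow> i \<in> {1..n} \<and> j \<in> {1..n} \<and> h \<in> {1..n}"
  unfolding lie_sc_def by blast

lemma lie_anti: "lie_sc n C \<Longrightarrow> C i j h = - C j i h"
  unfolding lie_sc_def by blast

lemma lie_diag: "lie_sc n C \<Longrightarrow> C i i h = 0"
  using lie_anti[of n C i i h] by simp

lemma card1_eq: "finite A \<Longrightarrow> card A \<le> 1 \<Longrightarrow> a \<in> A \<Longrightarrow> b \<in> A \<Longrightarrow> a = b"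
  using card_le_Suc0_iff_eq by fastforce

lemma nice1:
  assumes "lie_sc n C" "nice_sc n C" "h \<noteq> h'"
  shows "C i j h * C i j h' = 0"
proof (rule ccontr)
  assume "C i j h * C i j h' \<noteq> 0"
  hence a: "C i j h \<noteq> 0" "C i j h' \<noteq> 0" by auto
  with lie_out[OF assms(1)] have r: "i \<in> {1..n}" "j \<in> {1..n}" "h \<in> {1..n}" "h' \<in> {1..n}" by blast+
  from assms(2) r have "card {h\<in>{1..n}. C i j h \<noteq> 0} \<le> 1" unfolding nice_sc_def by blast
  from card1_eq[OF _ this, of h h'] a r assms(3) show False by auto
qed

lemma nice2:
  assumes "lie_sc n C" "nice_sc n C" "a \<noteq> b"
  shows "C i a j * C i b j = 0"
proof (rule ccontr)
  assume "C i a j * C i b j \<noteq> 0"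
  hence x: "C i a j \<noteq> 0" "C i b j \<noteq> 0" by auto
  with lie_out[OF assms(1)] have r: "i \<in> {1..n}" "j \<in> {1..n}" "a \<in> {1..n}" "b \<in> {1..n}" by blast+
  from assms(2) r have "card {l\<in>{1..n}. C i l j \<noteq> 0} \<le> 1" unfolding nice_sc_def by blast
  from card1_eq[OF _ this, of a b] x r assms(3) show False by auto
qed

lemma brk_scal: "brk n C a (\<lambda>h. c * w h) = (\<lambda>h. c * brk n C a w h)"
  unfolding brk_def by (simp add: sum_distrib_left mult_ac)

lemma brk_zero: "brk n C a (\<lambda>h. 0) = (\<lambda>h. 0)"
  unfolding brk_def by simp

lemma foldr_zero: "foldr (\<lambda>i v. brk n C (ev i) v) is (\<lambda>_. 0) = (\<lambda>_. 0)"
  by (induction "is") (simp_all add: brk_zero)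

lemma brk_basis:
  assumes "lie_sc n C" "nice_sc n C" "C x u v \<noteq> 0"
  shows "brk n C (ev x) (ev u) = (\<lambda>h. C x u v * ev v h)"
proof
  fix h
  from lie_out[OF assms(1,3)] have r: "x \<in> {1..n}" "u \<in> {1..n}" "v \<in> {1..n}" by auto
  have "brk n C (ev x) (ev u) h = (\<Sum>j\<in>{1..n}. ev u j * C x j h)" by (rule brk_ev_left[OF r(1)])
  also have "\<dots> = C x u h" by (rule ev_sum_left[OF r(2)]) simp
  also have "\<dots> = C x u v * ev v h"
  proof (cases "h = v")
    case False
    with nice1[OF assms(1,2) False, of x u] assms(3) show ?thesis by (simp add: ev_def)
  qed (simp add: ev_def)
  finally show "brk n C (ev x) (ev u) h = C x u v * ev v h" .
qed

lemma cyc2: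
  assumes nn: "nice_nilpotent n C"
  shows "C x u v * C y v u = 0"
proof (rule ccontr)
  assume "C x u v * C y v u \<noteq> 0"
  hence a: "C x u v \<noteq> 0" "C y v u \<noteq> 0" by auto
  from nn have L: "lie_sc n C" and Ni: "nice_sc n C" and Nil: "nilpotent_sc n C"
    unfolding nice_nilpotent_def by auto
  from lie_out[OF L a(1)] lie_out[OF L a(2)] have r: "x \<in> {1..n}" "u \<in> {1..n}" "v \<in> {1..n}" "y \<in> {1..n}" by auto
  define lam where "lam = C x u v * C y v u"
  have lam: "lam \<noteq> 0" using a by (simp add: lam_def)
  let ?f = "\<lambda>i v. brk n C (ev i) v"
  have F: "foldr ?f (concat (replicate p [y,x])) (ev u) = (\<lambda>h. lam ^ p * ev u h)" for p
  proof (induction p)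
    case 0 then show ?case by simp
  next
    case (Suc p)
    have "foldr ?f (concat (replicate (Suc p) [y,x])) (ev u) = ?f y (?f x (foldr ?f (concat (replicate p [y,x])) (ev u)))"
      by simp
    also have "\<dots> = (\<lambda>h. lam ^ Suc p * ev u h)"
      unfolding Suc brk_scal brk_basis[OF L Ni a(1)] brk_basis[OF L Ni a(2)]
      by (simp add: lam_def mult_ac)
    finally show ?case .
  qed
  from Nil obtain N where N: "\<And>is j. length is = N \<Longrightarrow> set is \<subseteq> {1..n} \<Longrightarrow> j \<in> {1..n} \<Longrightarrow>
       foldr ?f is (ev j) = (\<lambda>_. 0)" unfolding nilpotent_sc_def by blast
  define LL where "LL = concat (replicate N [y,x])"
  have len: "length LL = 2 * N" unfolding LL_def by (induction N) auto
  have setL: "set LL \<subseteq> {1..n}" unfolding LL_def using r by (induction N) auto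
  have split: "LL = take N LL @ drop N LL" by simp
  have "foldr ?f (drop N LL) (ev u) = (\<lambda>_. 0)"
    apply (rule N) using len setL r set_drop_subset[of N LL] by auto
  hence "foldr ?f LL (ev u) = (\<lambda>_. 0)"
    by (subst split, simp only: foldr_append o_apply, simp add: foldr_zero)
  hence "lam ^ N * ev u u = 0" using F[of N] unfolding LL_def by metis
  with lam show False by (simp add: ev_def)
qed

lemma cyc1: "nice_nilpotent n C \<Longrightarrow> C x u u = 0"
  using cyc2[of n C x u u x] by simp

definition rho :: "nat \<Rightarrow> sconst \<Rightarrow> (nat \<Rightarrow> real) \<Rightarrow> nat \<Rightarrow> nat \<Rightarrow> real" where
  "rho n C g a h = - (\<Sum>l\<in>{1..n}. \<Sum>j\<in>{1..n}. Gam C g l h j * Gam C g a j l)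
                   - (\<Sum>l\<in>{1..n}. \<Sum>i\<in>{1..n}. C l a i * Gam C g i h l)"

lemma Gam_lml: "nice_nilpotent n C \<Longrightarrow> Gam C g l j l = 0"
proof -
  assume nn: "nice_nilpotent n C"
  hence L: "lie_sc n C" unfolding nice_nilpotent_def by auto
  have "C j l l = 0" by (rule cyc1[OF nn])
  moreover have "C l j l = 0" using lie_anti[OF L, of l j l] \<open>C j l l = 0\<close> by simp
  moreover have "C l l j = 0" by (rule lie_diag[OF L])
  ultimately show ?thesis by (simp add: Gam_def)
qed

lemma LC_ev_left:
  assumes "l \<in> {1..n}" "h \<in> {1..n}"
  shows "LC n C g (ev l) W h = (\<Sum>j\<in>{1..n}. W j * Gam C g l j h)"
proof -
  have "LC n C g (ev l) W h = (\<Sum>i\<in>{1..n}. ev l i * (\<Sum>j\<in>{1..n}. W j * Gam C g i j h))"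
    unfolding LC_formula[OF assms(2)] by (simp add: sum_distrib_left mult.assoc)
  also have "\<dots> = (\<Sum>j\<in>{1..n}. W j * Gam C g l j h)"
    by (rule ev_sum_left[OF assms(1)]) simp
  finally show ?thesis .
qed

lemma LC_ev_right:
  assumes "b \<in> {1..n}" "h \<in> {1..n}"
  shows "LC n C g W (ev b) h = (\<Sum>i\<in>{1..n}. W i * Gam C g i b h)"
proof -
  have "LC n C g W (ev b) h = (\<Sum>i\<in>{1..n}. W i * (\<Sum>j\<in>{1..n}. ev b j * Gam C g i j h))"
    unfolding LC_formula[OF assms(2)] by (simp add: sum_distrib_left mult_ac)
  also have "\<dots> = (\<Sum>i\<in>{1..n}. W i * Gam C g i b h)"
    using ev_sum_left[OF assms(1)] by simp
  finally show ?thesis .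
qed

lemma LC_ev_ev:
  assumes "l \<in> {1..n}" "b \<in> {1..n}" "h \<in> {1..n}"
  shows "LC n C g (ev l) (ev b) h = Gam C g l b h"
  unfolding LC_ev_right[OF assms(2,3)] by (rule ev_sum_left[OF assms(1)]) simp

lemma ric_formula:
  assumes nn: "nice_nilpotent n C" and h: "h \<in> {1..n}"
  shows "ric_tensor n C g y (ev h) = (\<Sum>a\<in>{1..n}. y a * rho n C g a h)"
proof -
  let ?S = "{1..n::nat}"
  have c: "curv n C g (ev l) y (ev h) l =
      - (\<Sum>i\<in>?S. \<Sum>j\<in>?S. y i * (Gam C g l h j * Gam C g i j l))
      - (\<Sum>i\<in>?S. \<Sum>q\<in>?S. y q * (C l q i * Gam C g i h l))" if l: "l \<in> ?S" for l
  proof -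
    have 1: "LC n C g (ev l) (LC n C g y (ev h)) l = 0"
      unfolding LC_ev_left[OF l l] Gam_lml[OF nn] by simp
    have 2: "LC n C g y (LC n C g (ev l) (ev h)) l = (\<Sum>i\<in>?S. \<Sum>j\<in>?S. y i * (Gam C g l h j * Gam C g i j l))"
      unfolding LC_formula[OF l]
      by (intro sum.cong refl) (simp add: LC_ev_ev[OF l h] mult_ac)
    have 3: "LC n C g (brk n C (ev l) y) (ev h) l = (\<Sum>i\<in>?S. \<Sum>q\<in>?S. y q * (C l q i * Gam C g i h l))"
      unfolding LC_ev_right[OF h l] brk_ev_left[OF l] by (simp add: sum_distrib_left sum_distrib_right mult_ac)
    show ?thesis unfolding curv_def 1 2 3 by simp
  qed
  have "ric_tensor n C g y (ev h) = (\<Sum>l\<in>?S.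
      - (\<Sum>i\<in>?S. \<Sum>j\<in>?S. y i * (Gam C g l h j * Gam C g i j l))
      - (\<Sum>i\<in>?S. \<Sum>q\<in>?S. y q * (C l q i * Gam C g i h l)))"
    unfolding ric_tensor_def by (rule sum.cong) (auto simp: c)
  also have "\<dots> = - (\<Sum>l\<in>?S. \<Sum>i\<in>?S. \<Sum>j\<in>?S. y i * (Gam C g l h j * Gam C g i j l))
      - (\<Sum>l\<in>?S. \<Sum>i\<in>?S. \<Sum>q\<in>?S. y q * (C l q i * Gam C g i h l))"
    by (simp add: sum_subtractf sum_negf)
  also have "(\<Sum>l\<in>?S. \<Sum>i\<in>?S. \<Sum>j\<in>?S. y i * (Gam C g l h j * Gam C g i j l))
     = (\<Sum>a\<in>?S. y a * (\<Sum>l\<in>?S. \<Sum>j\<in>?S. Gam C g l h j * Gam C g a j l))"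
    by (subst sum.swap) (simp add: sum_distrib_left)
  also have "(\<Sum>l\<in>?S. \<Sum>i\<in>?S. \<Sum>q\<in>?S. y q * (C l q i * Gam C g i h l))
     = (\<Sum>l\<in>?S. \<Sum>q\<in>?S. \<Sum>i\<in>?S. y q * (C l q i * Gam C g i h l))"
    by (rule sum.cong[OF refl], rule sum.swap)
  also have "\<dots> = (\<Sum>a\<in>?S. y a * (\<Sum>l\<in>?S. \<Sum>i\<in>?S. C l a i * Gam C g i h l))"
    by (subst sum.swap) (simp add: sum_distrib_left)
  finally show ?thesis
    by (simp add: rho_def sum_distrib_left sum_subtractf[symmetric] sum_negf[symmetric] algebra_simps)
qed



lemma t1: fixes p1 p2 p3 p4 p5 p6 gj gl gh ga :: real
  assumes gl: "gl \<noteq> 0" and gj: "gj \<noteq> 0"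
  shows "2 * gj * gl * ((gj * p1 + gl * p2 + gh * p3) * (gl * p4 - ga * p5 + gj * p6) / (4 * gj * gl)
      + p6 * (gl * p2 + gj * p1 - gh * p3) / (2 * gl)
      + (- (gl * p2 + gj * p1 - gh * p3) * (gj * p6 - ga * p5 + gl * p4) / (4 * gl * gj)
      - p4 * (gj * p1 + gl * p2 + gh * p3) / (2 * gj))) =
    - gh * ga * p3 * p5 + gj ^ 2 * p1 * p6 + gj * gl * p2 * p6
    - gl * gj * p1 * p4 - gl ^ 2 * p2 * p4"
proof -
  define A where "A = gj * p1 + gl * p2"
  define B where "B = gl * p4 - ga * p5 + gj * p6"
  have B': "gj * p6 - ga * p5 + gl * p4 = B" unfolding B_def by simp
  have A1: "gj * p1 + gl * p2 + gh * p3 = A + gh * p3" "gl * p2 + gj * p1 - gh * p3 = A - gh * p3"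
    unfolding A_def by simp_all
  have F1: "2 * gj * gl * ((A + gh * p3) * B / (4 * gj * gl)) = (A + gh * p3) * B / 2"
    using gl gj by simp
  have F3: "2 * gj * gl * (- (A - gh * p3) * B / (4 * gl * gj)) = - (A - gh * p3) * B / 2"
    using gl gj by simp
  have F13': "(A + gh * p3) * B / 2 + - (A - gh * p3) * B / 2 = gh * p3 * B"
    by (simp add: add_divide_distrib[symmetric] algebra_simps)
  have F13: "2 * gj * gl * ((A + gh * p3) * B / (4 * gj * gl)) + 2 * gj * gl * (- (A - gh * p3) * B / (4 * gl * gj))
     = gh * p3 * B" unfolding F1 F3 F13' ..
  have F2: "2 * gj * gl * (p6 * (A - gh * p3) / (2 * gl)) = gj * p6 * (A - gh * p3)"
    using gl by simp
  have F4: "2 * gj * gl * (p4 * (A + gh * p3) / (2 * gj)) = gl * p4 * (A + gh * p3)"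
    using gj by simp
  have "2 * gj * gl * ((A + gh * p3) * B / (4 * gj * gl) + p6 * (A - gh * p3) / (2 * gl)
      + (- (A - gh * p3) * B / (4 * gl * gj)) - p4 * (A + gh * p3) / (2 * gj))
     = gh * p3 * B + gj * p6 * (A - gh * p3) - gl * p4 * (A + gh * p3)"
    using F13 F2 F4 by (simp add: distrib_left right_diff_distrib)
  then show ?thesis unfolding A1 B' by (simp add: A_def B_def algebra_simps power2_eq_square)
qed

definition Tt :: "sconst \<Rightarrow> (nat \<Rightarrow> real) \<Rightarrow> nat \<Rightarrow> nat \<Rightarrow> nat \<Rightarrow> nat \<Rightarrow> real" where
  "Tt C g a h l j = Gam C g l h j * Gam C g a j l + C l a j * Gam C g j h l"

lemma pt_ident:
  assumes anti: "\<And>i j k. C i j k = - C j i k"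
    and gl: "g l \<noteq> 0" and gj: "g j \<noteq> 0"
  shows "2 * g j * g l * (Tt C g a h l j + Tt C g a h j l) =
    - g h * g a * C j l h * C j l a + g j ^ 2 * C l h j * C l a j + g j * g l * C j h l * C l a j
    - g l * g j * C l h j * C a j l - g l ^ 2 * C j h l * C a j l"
proof -
  have e: "C h l j = - C l h j" "C h j l = - C j h l" "C l j h = - C j l h" "C j a l = - C a j l"
     "C l j a = - C j l a" "C a l j = - C l a j" by (rule anti)+
  have G1: "Gam C g l h j = (g j * C l h j + g l * C j h l + g h * C j l h) / (2 * g j)"
    unfolding Gam_def e by simp
  have G2: "Gam C g a j l = (g l * C a j l - g a * C j l a + g j * C l a j) / (2 * g l)"
    unfolding Gam_def e by simp
  have G3: "Gam C g j h l = (g l * C j h l + g j * C l h j - g h * C j l h) / (2 * g l)"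
    unfolding Gam_def e by simp
  have G4: "Gam C g a l j = - (g j * C l a j - g a * C j l a + g l * C a j l) / (2 * g j)"
    unfolding Gam_def e by simp
  have T1: "Tt C g a h l j = (g j * C l h j + g l * C j h l + g h * C j l h) * (g l * C a j l - g a * C j l a + g j * C l a j) / (4 * g j * g l)
      + C l a j * (g l * C j h l + g j * C l h j - g h * C j l h) / (2 * g l)"
    unfolding Tt_def G1 G2 G3 by simp
  have T2': "Tt C g a h j l = (g l * C j h l + g j * C l h j - g h * C j l h) * (- (g j * C l a j - g a * C j l a + g l * C a j l)) / (4 * g l * g j)
      - C a j l * (g j * C l h j + g l * C j h l + g h * C j l h) / (2 * g j)"
    unfolding Tt_def G1 G3 G4 e by simp
  have T2: "Tt C g a h j l = - (g l * C j h l + g j * C l h j - g h * C j l h) * (g j * C l a j - g a * C j l a + g l * C a j l) / (4 * g l * g j)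
      - C a j l * (g j * C l h j + g l * C j h l + g h * C j l h) / (2 * g j)"
    unfolding T2' by (simp only: mult_minus_right minus_mult_left)
  show ?thesis unfolding T1 T2 by (rule t1[OF gl gj])
qed


lemma sym_sum:
  assumes "finite A" and "\<And>l j. l \<in> A \<Longrightarrow> j \<in> A \<Longrightarrow> T l j + T j l = D l j + D j l"
  shows "(\<Sum>l\<in>A. \<Sum>j\<in>A. T l j) = (\<Sum>l\<in>A. \<Sum>j\<in>A. (D l j :: real))"
proof -
  have "2 * (\<Sum>l\<in>A. \<Sum>j\<in>A. T l j) = (\<Sum>l\<in>A. \<Sum>j\<in>A. T l j) + (\<Sum>l\<in>A. \<Sum>j\<in>A. T j l)"
    by (subst (2) sum.swap) simp
  also have "\<dots> = (\<Sum>l\<in>A. \<Sum>j\<in>A. T l j + T j l)" by (simp add: sum.distrib)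
  also have "\<dots> = (\<Sum>l\<in>A. \<Sum>j\<in>A. D l j + D j l)" using assms(2) by (simp cong: sum.cong)
  also have "\<dots> = (\<Sum>l\<in>A. \<Sum>j\<in>A. D l j) + (\<Sum>l\<in>A. \<Sum>j\<in>A. D j l)" by (simp add: sum.distrib)
  also have "\<dots> = 2 * (\<Sum>l\<in>A. \<Sum>j\<in>A. D l j)" by (subst (2) sum.swap) simp
  finally show ?thesis by simp
qed

lemma rho_Tt: "rho n C g a h = - (\<Sum>l\<in>{1..n}. \<Sum>j\<in>{1..n}. Tt C g a h l j)"
  unfolding rho_def Tt_def by (simp add: sum.distrib)

definition Dd :: "sconst \<Rightarrow> (nat \<Rightarrow> real) \<Rightarrow> nat \<Rightarrow> nat \<Rightarrow> nat \<Rightarrow> real" where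
  "Dd C g h l j = - (g h ^ 2 * C j l h ^ 2 / (4 * g j * g l)) + g j * C l h j ^ 2 / (2 * g l)"

lemma rho_value:
  assumes nn: "nice_nilpotent n C" and g: "\<forall>i\<in>{1..n}. g i \<noteq> 0"
  shows "rho n C g a h = (if a = h then - (\<Sum>l\<in>{1..n}. \<Sum>j\<in>{1..n}. Dd C g h l j) else 0)"
proof -
  from nn have L: "lie_sc n C" and Ni: "nice_sc n C" unfolding nice_nilpotent_def by auto
  have anti: "\<And>i j k. C i j k = - C j i k" by (rule lie_anti[OF L])
  show ?thesis
  proof (cases "a = h")
    case False
    have "(\<Sum>l\<in>{1..n}. \<Sum>j\<in>{1..n}. Tt C g a h l j) = (\<Sum>l\<in>{1..n}. \<Sum>j\<in>{1..n}. (\<lambda>l j. 0::real) l j)"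
    proof (rule sym_sum)
      fix l j assume l: "l \<in> {1..n}" and j: "j \<in> {1..n}"
      have gl: "g l \<noteq> 0" and gj: "g j \<noteq> 0" using g l j by auto
      have z1: "C j l h * C j l a = 0" using nice1[OF L Ni, of h a] False by auto
      have z2: "C l h j * C l a j = 0" using nice2[OF L Ni, of h a] False by auto
      have z3: "C j h l * C l a j = 0" using cyc2[OF nn, of h j l a] anti[of h j l] anti[of a l j] by simp
      have z4: "C l h j * C a j l = 0" using cyc2[OF nn, of h l j a] anti[of h l j] by simp
      have z5: "C j h l * C a j l = 0" using nice2[OF L Ni, of h a j l] False anti[of a j l] by simp
      have "2 * g j * g l * (Tt C g a h l j + Tt C g a h j l) = 0"
        unfolding pt_ident[OF anti gl gj]
        by (simp add: mult.assoc z1 z2 z3 z4 z5 mult.left_commute[of _ "C l h j"] mult.left_commute[of _ "C j h l"] mult.left_commute[of _ "C j l h"])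
      then show "Tt C g a h l j + Tt C g a h j l = 0 + 0" using gl gj by simp
    qed simp
    then show ?thesis using False by (simp add: rho_Tt)
  next
    case True
    have "(\<Sum>l\<in>{1..n}. \<Sum>j\<in>{1..n}. Tt C g a h l j) = (\<Sum>l\<in>{1..n}. \<Sum>j\<in>{1..n}. Dd C g h l j)"
    proof (rule sym_sum)
      fix l j assume l: "l \<in> {1..n}" and j: "j \<in> {1..n}"
      have gl: "g l \<noteq> 0" and gj: "g j \<noteq> 0" using g l j by auto
      have z: "C l h j * C j h l = 0" using cyc2[OF nn, of h l j h] anti[of h l j] anti[of h j l] by simp
      have e: "C h j l = - C j h l" "C l j h = - C j l h" by (rule anti)+
      have 1: "2 * g j * g l * (Tt C g a h l j + Tt C g a h j l) = - (g h ^ 2 * C j l h ^ 2) + g j ^ 2 * C l h j ^ 2 + g l ^ 2 * C j h l ^ 2"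
        unfolding pt_ident[OF anti gl gj] True e using z
        by (simp add: power2_eq_square algebra_simps)
      have 2: "2 * g j * g l * (Dd C g h l j + Dd C g h j l) = - (g h ^ 2 * C j l h ^ 2) + g j ^ 2 * C l h j ^ 2 + g l ^ 2 * C j h l ^ 2"
        unfolding Dd_def e using gl gj by (simp add: field_simps power2_eq_square)
      have nz: "2 * g j * g l \<noteq> 0" using gl gj by simp
      from 1 2 have "2 * g j * g l * (Tt C g a h l j + Tt C g a h j l) = 2 * g j * g l * (Dd C g h l j + Dd C g h j l)" by simp
      then show "Tt C g a h l j + Tt C g a h j l = Dd C g h l j + Dd C g h j l" using mult_left_cancel[OF nz] by blast
    qed simp
    then show ?thesis using True by (simp add: rho_Tt)
  qed
qed


lemma arrow_iff:
  assumes L: "lie_sc n C" and Ni: "nice_sc n C"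
  shows "arrow n C i j k \<longleftrightarrow> C i j k \<noteq> 0"
proof
  assume a: "arrow n C i j k"
  then obtain \<mu> where r: "i \<in> {1..n}" "j \<in> {1..n}" "k \<in> {1..n}" and
    m: "\<forall>h\<in>{1..n}. ev k h = \<mu> * brk n C (ev i) (ev j) h" unfolding arrow_def by blast
  have "brk n C (ev i) (ev j) k = C i j k"
    unfolding brk_ev_left[OF r(1)] by (rule ev_sum_left[OF r(2)]) simp
  from m r(3) have "ev k k = \<mu> * brk n C (ev i) (ev j) k" by blast
  with \<open>brk n C (ev i) (ev j) k = C i j k\<close> have "1 = \<mu> * C i j k" by (simp add: ev_def)
  then show "C i j k \<noteq> 0" by auto
next
  assume c: "C i j k \<noteq> 0"
  from lie_out[OF L c] have r: "i \<in> {1..n}" "j \<in> {1..n}" "k \<in> {1..n}" by auto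
  have "\<forall>h\<in>{1..n}. ev k h = (1 / C i j k) * brk n C (ev i) (ev j) h"
    unfolding brk_basis[OF L Ni c] using c by simp
  with r c show "arrow n C i j k" unfolding arrow_def
    by (intro conjI exI[of _ "1 / C i j k"]) auto
qed

lemma C_nz_swap: "lie_sc n C \<Longrightarrow> (C j i k = 0) = (C i j k = 0)"
  by (subst lie_anti[of n C j i k]) simp_all

lemma I_Delta_eq:
  assumes L: "lie_sc n C" and Ni: "nice_sc n C"
  shows "I_Delta n C = {(i,j,k). i < j \<and> C i j k \<noteq> 0}"
  unfolding I_Delta_def arrow_iff[OF L Ni] C_nz_swap[OF L] by auto

lemma I_Delta_sub:
  assumes L: "lie_sc n C" and Ni: "nice_sc n C"
  shows "I_Delta n C \<subseteq> {1..n} \<times> {1..n} \<times> {1..n}"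
  unfolding I_Delta_eq[OF L Ni] using lie_out[OF L] by auto

lemma I_Delta_finite:
  assumes L: "lie_sc n C" and Ni: "nice_sc n C"
  shows "finite (I_Delta n C)"
  using I_Delta_sub[OF L Ni] by (rule finite_subset) simp

definition XX :: "sconst \<Rightarrow> (nat \<Rightarrow> real) \<Rightarrow> nat \<Rightarrow> nat \<Rightarrow> nat \<Rightarrow> real" where
  "XX C g i j k = C i j k ^ 2 * g k / (g i * g j)"

definition Xg :: "sconst \<Rightarrow> (nat \<Rightarrow> real) \<Rightarrow> triple \<Rightarrow> real" where
  "Xg C g t = (case t of (i,j,k) \<Rightarrow> XX C g i j k)"

lemma C_sq_swap: "lie_sc n C \<Longrightarrow> C j i k ^ 2 = C i j k ^ 2"
  by (subst lie_anti[of n C j i k]) simp_all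

lemma half_sum:
  fixes A :: "nat set"
  assumes "finite A" and sym: "\<And>i j. G i j = G j i" and d: "\<And>i. G i i = 0"
  shows "(\<Sum>i\<in>A. \<Sum>j\<in>A. if i < j then G i j else 0) = (1/2) * (\<Sum>i\<in>A. \<Sum>j\<in>A. (G i j :: real))"
proof -
  have "(\<Sum>i\<in>A. \<Sum>j\<in>A. G i j) = (\<Sum>i\<in>A. \<Sum>j\<in>A. (if i < j then G i j else 0) + (if j < i then G i j else 0))"
    by (intro sum.cong refl) (auto simp: d dest: not_less_iff_gr_or_eq[THEN iffD1])
  also have "\<dots> = (\<Sum>i\<in>A. \<Sum>j\<in>A. if i < j then G i j else 0) + (\<Sum>i\<in>A. \<Sum>j\<in>A. if j < i then G i j else 0)"
    by (simp add: sum.distrib)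
  also have "(\<Sum>i\<in>A. \<Sum>j\<in>A. if j < i then G i j else 0) = (\<Sum>j\<in>A. \<Sum>i\<in>A. if j < i then G i j else 0)"
    by (rule sum.swap)
  also have "\<dots> = (\<Sum>i\<in>A. \<Sum>j\<in>A. if i < j then G i j else 0)"
    by (intro sum.cong refl) (simp add: sym)
  finally show ?thesis by simp
qed

lemma MT_Xg:
  assumes L: "lie_sc n C" and Ni: "nice_sc n C" and h: "h \<in> {1..n}"
  shows "MT n C (Xg C g) h = (1/2) * (\<Sum>i\<in>{1..n}. \<Sum>j\<in>{1..n}. XX C g i j h)
                             - (\<Sum>j\<in>{1..n}. \<Sum>k\<in>{1..n}. XX C g h j k)"
proof -
  let ?S = "{1..n::nat}"
  let ?W = "?S \<times> ?S \<times> ?S"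
  let ?F = "\<lambda>t. of_int (root_entry t h) * Xg C g t"
  let ?F' = "\<lambda>t. if fst t < fst (snd t) then ?F t else 0"
  have "MT n C (Xg C g) h = (\<Sum>t\<in>I_Delta n C. ?F' t)"
    unfolding MT_def by (rule sum.cong) (auto simp: I_Delta_eq[OF L Ni])
  also have "\<dots> = (\<Sum>t\<in>?W. ?F' t)"
  proof (rule sum.mono_neutral_left)
    show "\<forall>t\<in>?W - I_Delta n C. ?F' t = 0"
      by (auto simp: I_Delta_eq[OF L Ni] Xg_def XX_def)
    show "I_Delta n C \<subseteq> ?W" by (rule I_Delta_sub[OF L Ni])
  qed simp
  also have "\<dots> = (\<Sum>i\<in>?S. \<Sum>j\<in>?S. \<Sum>k\<in>?S. ?F' (i,j,k))"
    unfolding sum.cartesian_product split_def prod.collapse ..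
  also have "\<dots> = (\<Sum>i\<in>?S. \<Sum>j\<in>?S. if i < j then (\<Sum>k\<in>?S. ?F (i,j,k)) else 0)"
    by (intro sum.cong refl) simp
  also have "\<dots> = (1/2) * (\<Sum>i\<in>?S. \<Sum>j\<in>?S. \<Sum>k\<in>?S. ?F (i,j,k))"
  proof (rule half_sum)
    fix i j show "(\<Sum>k\<in>?S. ?F (i,j,k)) = (\<Sum>k\<in>?S. ?F (j,i,k))"
      by (intro sum.cong refl) (simp add: root_entry_def Xg_def XX_def C_sq_swap[OF L, of j i] mult.commute)
  next
    fix i show "(\<Sum>k\<in>?S. ?F (i,i,k)) = 0"
      by (simp add: Xg_def XX_def lie_diag[OF L])
  qed simp
  also have "(\<Sum>i\<in>?S. \<Sum>j\<in>?S. \<Sum>k\<in>?S. ?F (i,j,k)) =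
      (\<Sum>i\<in>?S. \<Sum>j\<in>?S. \<Sum>k\<in>?S. (if k = h then XX C g i j k else 0)
          - (if i = h then XX C g i j k else 0) - (if j = h then XX C g i j k else 0))"
    by (intro sum.cong refl) (simp add: root_entry_def Xg_def algebra_simps)
  also have "\<dots> = (\<Sum>i\<in>?S. \<Sum>j\<in>?S. XX C g i j h) - (\<Sum>j\<in>?S. \<Sum>k\<in>?S. XX C g h j k)
        - (\<Sum>i\<in>?S. \<Sum>k\<in>?S. XX C g i h k)"
  proof -
    have P1: "(\<Sum>i\<in>?S. \<Sum>j\<in>?S. \<Sum>k\<in>?S. if i = h then XX C g i j k else 0) = (\<Sum>j\<in>?S. \<Sum>k\<in>?S. XX C g h j k)"
    proof -
      have "(\<Sum>i\<in>?S. \<Sum>j\<in>?S. \<Sum>k\<in>?S. if i = h then XX C g i j k else 0)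
          = (\<Sum>i\<in>?S. if i = h then (\<Sum>j\<in>?S. \<Sum>k\<in>?S. XX C g i j k) else 0)"
        by (intro sum.cong refl) auto
      then show ?thesis using h by (simp add: sum.delta')
    qed
    have P2: "(\<Sum>i\<in>?S. \<Sum>j\<in>?S. \<Sum>k\<in>?S. if j = h then XX C g i j k else 0) = (\<Sum>i\<in>?S. \<Sum>k\<in>?S. XX C g i h k)"
    proof (rule sum.cong[OF refl])
      fix i assume "i \<in> ?S"
      have "(\<Sum>j\<in>?S. \<Sum>k\<in>?S. if j = h then XX C g i j k else 0)
          = (\<Sum>j\<in>?S. if j = h then (\<Sum>k\<in>?S. XX C g i j k) else 0)"
        by (intro sum.cong refl) auto
      then show "(\<Sum>j\<in>?S. \<Sum>k\<in>?S. if j = h then XX C g i j k else 0) = (\<Sum>k\<in>?S. XX C g i h k)"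
        using h by (simp add: sum.delta')
    qed
    have P0: "(\<Sum>i\<in>?S. \<Sum>j\<in>?S. \<Sum>k\<in>?S. if k = h then XX C g i j k else 0) = (\<Sum>i\<in>?S. \<Sum>j\<in>?S. XX C g i j h)"
      using h by (simp add: sum.delta')
    show ?thesis unfolding sum_subtractf P0 P1 P2 ..
  qed
  also have "(\<Sum>i\<in>?S. \<Sum>k\<in>?S. XX C g i h k) = (\<Sum>j\<in>?S. \<Sum>k\<in>?S. XX C g h j k)"
    by (intro sum.cong refl) (simp add: XX_def C_sq_swap[OF L, of _ h] mult.commute)
  finally show ?thesis by (simp add: algebra_simps)
qed



definition ip :: "'b set \<Rightarrow> ('b \<Rightarrow> real) \<Rightarrow> ('b \<Rightarrow> real) \<Rightarrow> real" where
  "ip I x y = (\<Sum>t\<in>I. x t * y t)"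

inductive inspan :: "('b \<Rightarrow> real) list \<Rightarrow> ('b \<Rightarrow> real) \<Rightarrow> bool" for L where
  span0: "inspan L (\<lambda>t. 0)"
| spanS: "u \<in> set L \<Longrightarrow> inspan L p \<Longrightarrow> inspan L (\<lambda>t. p t + c * u t)"

lemma inspan_add: "inspan L q \<Longrightarrow> inspan L p \<Longrightarrow> inspan L (\<lambda>t. p t + q t)"
proof (induction q rule: inspan.induct)
  case span0 then show ?case by simp
next
  case (spanS u q c)
  have "inspan L (\<lambda>t. (p t + q t) + c * u t)" using spanS by (intro inspan.spanS) auto
  then show ?case by (simp add: add.assoc)
qed

lemma inspan_scale: "inspan L p \<Longrightarrow> inspan L (\<lambda>t. a * p t)"
proof (induction p rule: inspan.induct)
  case span0 then show ?case by (simp add: inspan.span0)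
next
  case (spanS u p c)
  have "inspan L (\<lambda>t. a * p t + (a * c) * u t)" using spanS by (intro inspan.spanS) auto
  then show ?case by (simp add: algebra_simps)
qed

lemma inspan_mono: "inspan L p \<Longrightarrow> set L \<subseteq> set L' \<Longrightarrow> inspan L' p"
  by (induction p rule: inspan.induct) (auto intro: inspan.intros)

lemma inspan_elem: "u \<in> set L \<Longrightarrow> inspan L u"
  using inspan.spanS[OF _ inspan.span0, of u L 1] by simp

lemma ip_add_right: "ip I x (\<lambda>t. p t + c * u t) = ip I x p + c * ip I x u"
  unfolding ip_def by (simp add: sum.distrib sum_distrib_left algebra_simps)

lemma orth_span: "inspan L p \<Longrightarrow> (\<forall>u\<in>set L. ip I r u = 0) \<Longrightarrow> ip I r p = 0"
  by (induction p rule: inspan.induct) (auto simp: ip_add_right, simp add: ip_def)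

lemma ip_comm: "ip I x y = ip I y x"
  unfolding ip_def by (simp add: mult.commute)

lemma ip_diff_left: "ip I (\<lambda>t. x t - y t) w = ip I x w - ip I y w"
  unfolding ip_def by (simp add: sum_subtractf algebra_simps)

lemma ip_scale_left: "ip I (\<lambda>t. a * x t) w = a * ip I x w"
  unfolding ip_def by (simp add: sum_distrib_left algebra_simps)

lemma ip_add_left: "ip I (\<lambda>t. x t + y t) w = ip I x w + ip I y w"
  unfolding ip_def by (simp add: sum.distrib algebra_simps)

lemma ip_diff_right: "ip I w (\<lambda>t. x t - y t) = ip I w x - ip I w y"
  unfolding ip_def by (simp add: sum_subtractf algebra_simps)

lemma ip_add_right2: "ip I w (\<lambda>t. x t + y t) = ip I w x + ip I w y"
  unfolding ip_def by (simp add: sum.distrib algebra_simps)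

lemma ip_self_zero: "finite I \<Longrightarrow> ip I x x = 0 \<Longrightarrow> t \<in> I \<Longrightarrow> x t = 0"
  unfolding ip_def by (subst (asm) sum_nonneg_eq_0_iff) auto

lemma ip_zero_left: "finite I \<Longrightarrow> (\<forall>t\<in>I. x t = 0) \<Longrightarrow> ip I x w = 0"
  unfolding ip_def by simp

lemma GS:
  assumes fin: "finite I"
  shows "\<exists>p. inspan L p \<and> (\<forall>u\<in>set L. ip I (\<lambda>t. v t - p t) u = 0)"
proof (induction L arbitrary: v)
  case Nil then show ?case by (auto intro: inspan.span0)
next
  case (Cons u L)
  obtain pu where pu: "inspan L pu" "\<forall>w\<in>set L. ip I (\<lambda>t. u t - pu t) w = 0" using Cons.IH[of u] by blast
  obtain pv where pv: "inspan L pv" "\<forall>w\<in>set L. ip I (\<lambda>t. v t - pv t) w = 0" using Cons.IH[of v] by blast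
  define u' where "u' = (\<lambda>t. u t - pu t)"
  define v' where "v' = (\<lambda>t. v t - pv t)"
  have sub: "set L \<subseteq> set (u # L)" by auto
  have ou: "\<forall>w\<in>set L. ip I u' w = 0" using pu(2) unfolding u'_def .
  have ov: "\<forall>w\<in>set L. ip I v' w = 0" using pv(2) unfolding v'_def .
  have ovpu: "ip I v' pu = 0" by (rule orth_span[OF pu(1) ov])
  have uu: "u = (\<lambda>t. u' t + pu t)" unfolding u'_def by simp
  show ?case
  proof (cases "ip I u' u' = 0")
    case True
    have z: "\<forall>t\<in>I. u' t = 0" using ip_self_zero[OF fin True] by blast
    have "ip I v' u = 0"
      by (subst uu, simp only: ip_comm[of I v'] ip_add_left, simp add: ip_zero_left[OF fin z] ip_comm[of I pu] ovpu)
    then show ?thesis using pv ov inspan_mono[OF pv(1) sub] unfolding v'_def by (intro exI[of _ pv]) auto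
  next
    case False
    define lam where "lam = ip I v' u' / ip I u' u'"
    define p where "p = (\<lambda>t. pv t + (lam * u t + (- lam) * pu t))"
    have pin: "inspan (u # L) p" unfolding p_def
      by (intro inspan_add inspan_scale inspan_elem inspan_mono[OF pu(1) sub] inspan_mono[OF pv(1) sub])
         (auto intro: inspan_mono[OF pv(1) sub] inspan_mono[OF pu(1) sub] inspan_elem inspan_scale)
    have vp: "(\<lambda>t. v t - p t) = (\<lambda>t. v' t - lam * u' t)"
      unfolding p_def v'_def u'_def by (simp add: algebra_simps)
    have oL: "\<forall>w\<in>set L. ip I (\<lambda>t. v' t - lam * u' t) w = 0"
      using ou ov by (simp add: ip_diff_left ip_scale_left)
    have o1: "ip I (\<lambda>t. v' t - lam * u' t) u' = 0"
      using False by (simp only: ip_diff_left ip_scale_left) (simp add: lam_def)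
    have o2: "ip I (\<lambda>t. v' t - lam * u' t) pu = 0" by (rule orth_span[OF pu(1) oL])
    have o3: "ip I (\<lambda>t. v' t - lam * u' t) u = 0"
    proof -
      have "ip I (\<lambda>t. v' t - lam * u' t) u = ip I (\<lambda>t. v' t - lam * u' t) (\<lambda>t. u' t + pu t)"
        by (simp add: u'_def)
      also have "\<dots> = 0" unfolding ip_add_right2 o1 o2 by simp
      finally show ?thesis .
    qed
    show ?thesis by (intro exI[of _ p]) (simp add: vp pin oL o3)
  qed
qed

lemma span_repr:
  assumes "inspan L p" "set L \<subseteq> (\<lambda>l t. r t l) ` S" "finite S"
  shows "\<exists>w. \<forall>t. p t = (\<Sum>l\<in>S. w l * r t l)"
  using assms
proof (induction p rule: inspan.induct)
  case span0 then show ?case by (intro exI[of _ "\<lambda>l. 0"]) simp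
next
  case (spanS u p c)
  then obtain w where w: "\<forall>t. p t = (\<Sum>l\<in>S. w l * r t l)" by blast
  from spanS obtain l0 where l0: "l0 \<in> S" "u = (\<lambda>t. r t l0)" by blast
  show ?case
  proof (intro exI[of _ "\<lambda>l. w l + (if l = l0 then c else 0)"] allI)
    fix t
    have "(\<Sum>l\<in>S. (w l + (if l = l0 then c else 0)) * r t l) = (\<Sum>l\<in>S. w l * r t l) + (\<Sum>l\<in>S. (if l = l0 then c * r t l else 0))"
    proof -
      have "(\<Sum>l\<in>S. (w l + (if l = l0 then c else 0)) * r t l) = (\<Sum>l\<in>S. w l * r t l + (if l = l0 then c * r t l else 0))"
        by (intro sum.cong refl) (simp add: distrib_right)
      then show ?thesis by (simp add: sum.distrib)
    qed
    also have "\<dots> = p t + c * u t" using w l0 spanS.prems(2) by (simp add: sum.delta')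
    finally show "p t + c * u t = (\<Sum>l\<in>S. (w l + (if l = l0 then c else 0)) * r t l)" by simp
  qed
qed

lemma LA:
  fixes r :: "'b \<Rightarrow> nat \<Rightarrow> real"
  assumes fin: "finite I"
    and H: "\<And>\<beta>. (\<forall>t. t \<notin> I \<longrightarrow> \<beta> t = 0) \<Longrightarrow> (\<forall>l\<in>{1..n}. (\<Sum>t\<in>I. r t l * \<beta> t) = 0) \<Longrightarrow> (\<Sum>t\<in>I. \<beta> t * v t) = 0"
  shows "\<exists>w. \<forall>t\<in>I. v t = (\<Sum>l\<in>{1..n}. r t l * w l)"
proof -
  define L where "L = map (\<lambda>l t. r t l) [1..<n+1]"
  have setL: "set L = (\<lambda>l t. r t l) ` {1..n}" unfolding L_def by auto
  obtain p where p: "inspan L p" "\<forall>u\<in>set L. ip I (\<lambda>t. v t - p t) u = 0" using GS[OF fin] by blast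
  obtain w where w: "\<forall>t. p t = (\<Sum>l\<in>{1..n}. w l * r t l)" using span_repr[OF p(1), of r "{1..n}"] setL by auto
  define \<beta> where "\<beta> = (\<lambda>t. if t \<in> I then v t - p t else 0)"
  have "(\<Sum>t\<in>I. \<beta> t * v t) = 0"
  proof (rule H)
    show "\<forall>t. t \<notin> I \<longrightarrow> \<beta> t = 0" unfolding \<beta>_def by simp
    show "\<forall>l\<in>{1..n}. (\<Sum>t\<in>I. r t l * \<beta> t) = 0"
    proof
      fix l assume "l \<in> {1..n}"
      then have "ip I (\<lambda>t. v t - p t) (\<lambda>t. r t l) = 0" using p(2) setL by auto
      then show "(\<Sum>t\<in>I. r t l * \<beta> t) = 0" unfolding ip_def \<beta>_def by (simp add: mult.commute)
    qed
  qed
  then have a: "ip I (\<lambda>t. v t - p t) v = 0" unfolding ip_def \<beta>_def by simp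
  have b: "ip I (\<lambda>t. v t - p t) p = 0" by (rule orth_span[OF p(1) p(2)])
  have "ip I (\<lambda>t. v t - p t) (\<lambda>t. v t - p t) = 0"
    unfolding ip_diff_right[of I "\<lambda>t. v t - p t" v p] a b by simp
  then have "\<forall>t\<in>I. v t = p t" using ip_self_zero[OF fin] by fastforce
  then show ?thesis using w by (intro exI[of _ w]) (simp add: mult.commute)
qed



lemma root_sum:
  fixes f :: "nat \<Rightarrow> 'a::comm_ring_1"
  assumes "i \<in> {1..n}" "j \<in> {1..n}" "k \<in> {1..n}"
  shows "(\<Sum>l\<in>{1..n}. of_int (root_entry (i,j,k) l) * f l) = f k - f i - f j"
proof -
  have "(\<Sum>l\<in>{1..n}. of_int (root_entry (i,j,k) l) * f l) =
     (\<Sum>l\<in>{1..n}. (if l = k then f l else 0) - (if l = i then f l else 0) - (if l = j then f l else 0))"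
    by (intro sum.cong refl) (simp add: root_entry_def algebra_simps)
  also have "\<dots> = f k - f i - f j" using assms by (simp add: sum_subtractf sum.delta')
  finally show ?thesis .
qed

lemma M2_val:
  assumes "i \<in> {1..n}" "j \<in> {1..n}" "k \<in> {1..n}"
  shows "M2 n \<delta> (i,j,k) = (\<delta> k - \<delta> i - \<delta> j) mod 2"
  unfolding M2_def using root_sum[OF assms, of \<delta>] by simp

lemma sign_lemma:
  fixes a b c x :: real
  assumes "a \<noteq> 0" "b \<noteq> 0" "c \<noteq> 0" "x \<noteq> 0"
  shows "logsign (x ^ 2 * c / (a * b)) = (logsign c - logsign a - logsign b) mod 2"
proof -
  have x2: "x ^ 2 > 0" using assms(4) by simp
  have "a > 0 \<or> a < 0" "b > 0 \<or> b < 0" "c > 0 \<or> c < 0" using assms by auto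
  then show ?thesis using x2
    by (elim disjE) (auto simp: logsign_def zero_less_divide_iff zero_less_mult_iff mult_less_0_iff divide_less_0_iff)
qed

lemma ricci_formula:
  assumes nn: "nice_nilpotent n C" and g: "\<forall>i\<in>{1..n}. g i \<noteq> 0" and h: "h \<in> {1..n}"
  shows "ricci_op n C g y h = y h * (MT n C (Xg C g) h / 2)"
proof -
  let ?S = "{1..n::nat}"
  from nn have L: "lie_sc n C" and Ni: "nice_sc n C" unfolding nice_nilpotent_def by auto
  define R where "R = - (\<Sum>l\<in>?S. \<Sum>j\<in>?S. Dd C g h l j)"
  have "ric_tensor n C g y (ev h) = (\<Sum>a\<in>?S. if a = h then y a * R else 0)"
    unfolding ric_formula[OF nn h] rho_value[OF nn g] R_def by (intro sum.cong refl) simp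
  also have "\<dots> = y h * R" using h by (simp add: sum.delta')
  finally have r: "ricci_op n C g y h = y h * (R / g h)" using h unfolding ricci_op_def by simp
  have gh: "g h \<noteq> 0" using g h by auto
  have pt: "- Dd C g h l j / g h = XX C g j l h / 4 - XX C g l h j / 2" if "l \<in> ?S" "j \<in> ?S" for l j
  proof -
    have "g l \<noteq> 0" "g j \<noteq> 0" using g that by auto
    then show ?thesis using gh by (simp add: Dd_def XX_def field_simps power2_eq_square)
  qed
  have "R / g h = (\<Sum>l\<in>?S. \<Sum>j\<in>?S. - Dd C g h l j / g h)"
    unfolding R_def by (simp add: sum_divide_distrib sum_negf)
  also have "\<dots> = (\<Sum>l\<in>?S. \<Sum>j\<in>?S. XX C g j l h / 4 - XX C g l h j / 2)"
    by (intro sum.cong refl, rule pt) auto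
  also have "\<dots> = (1/4) * (\<Sum>l\<in>?S. \<Sum>j\<in>?S. XX C g j l h) - (1/2) * (\<Sum>l\<in>?S. \<Sum>j\<in>?S. XX C g l h j)"
    by (simp add: sum_subtractf sum_distrib_left sum_divide_distrib)
  also have "(\<Sum>l\<in>?S. \<Sum>j\<in>?S. XX C g j l h) = (\<Sum>i\<in>?S. \<Sum>j\<in>?S. XX C g i j h)"
    by (rule sum.swap)
  also have "(\<Sum>l\<in>?S. \<Sum>j\<in>?S. XX C g l h j) = (\<Sum>j\<in>?S. \<Sum>k\<in>?S. XX C g h j k)"
    by (intro sum.cong refl) (simp add: XX_def C_sq_swap[OF L, of _ h] mult.commute)
  finally have "R / g h = MT n C (Xg C g) h / 2" unfolding MT_Xg[OF L Ni h] by simp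
  with r show ?thesis by simp
qed



lemma ln_abs_real: "ln \<bar>x::real\<bar> = ln x"
  by (cases "x \<ge> 0") (simp_all add: ln_minus)

lemma exp2ln: "(x::real) \<noteq> 0 \<Longrightarrow> exp (2 * ln \<bar>x\<bar>) = \<bar>x\<bar> ^ 2"
proof -
  assume x: "x \<noteq> 0"
  have "exp (2 * ln \<bar>x\<bar>) = exp (ln \<bar>x\<bar> + ln \<bar>x\<bar>)" by (simp only: mult_2)
  also have "\<dots> = exp (ln \<bar>x\<bar>) * exp (ln \<bar>x\<bar>)" by (rule exp_add)
  also have "\<dots> = \<bar>x\<bar> ^ 2" using x by (simp add: power2_eq_square)
  finally show ?thesis .
qed

lemma logsign_eq:
  fixes x y :: real
  assumes "x \<noteq> 0" "y \<noteq> 0" "\<bar>x\<bar> = \<bar>y\<bar>" "logsign x = logsign y"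
  shows "x = y"
  using assms by (auto simp: logsign_def abs_if split: if_splits)

lemma Xg_abspow_term:
  assumes L: "lie_sc n C" and Ni: "nice_sc n C" and g: "\<forall>i\<in>{1..n}. g i \<noteq> 0"
    and t: "t \<in> I_Delta n C"
  shows "\<bar>Xg C g t\<bar> powr a = \<bar>sc_c C t\<bar> powr (2 * a) *
          exp (a * (\<Sum>l\<in>{1..n}. of_int (root_entry t l) * ln \<bar>g l\<bar>))"
proof -
  obtain i j k where tt: "t = (i,j,k)" by (cases t) auto
  have c: "C i j k \<noteq> 0" using t tt I_Delta_eq[OF L Ni] by auto
  have r: "i \<in> {1..n}" "j \<in> {1..n}" "k \<in> {1..n}" using lie_out[OF L c] by auto
  have gi: "g i \<noteq> 0" and gj: "g j \<noteq> 0" and gk: "g k \<noteq> 0" using g r by auto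
  have rs: "(\<Sum>l\<in>{1..n}. of_int (root_entry t l) * ln \<bar>g l\<bar>) = ln \<bar>g k\<bar> - ln \<bar>g i\<bar> - ln \<bar>g j\<bar>"
    unfolding tt by (rule root_sum[OF r])
  have X: "\<bar>Xg C g t\<bar> = \<bar>C i j k\<bar> ^ 2 * \<bar>g k\<bar> / (\<bar>g i\<bar> * \<bar>g j\<bar>)"
    unfolding tt Xg_def XX_def by (simp add: abs_mult power2_abs)
  have Xnz: "\<bar>Xg C g t\<bar> \<noteq> 0" unfolding X using c gi gj gk by simp
  have lnX: "ln \<bar>Xg C g t\<bar> = 2 * ln \<bar>C i j k\<bar> + (ln \<bar>g k\<bar> - ln \<bar>g i\<bar> - ln \<bar>g j\<bar>)"
    unfolding X using c gi gj gk by (simp add: ln_div ln_mult ln_realpow ln_abs_real)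
  have "\<bar>Xg C g t\<bar> powr a = exp (a * ln \<bar>Xg C g t\<bar>)" using Xnz by (simp add: powr_def)
  also have "\<dots> = exp ((2 * a) * ln \<bar>C i j k\<bar>) * exp (a * (ln \<bar>g k\<bar> - ln \<bar>g i\<bar> - ln \<bar>g j\<bar>))"
    unfolding lnX by (simp add: exp_add[symmetric] algebra_simps)
  also have "exp ((2 * a) * ln \<bar>C i j k\<bar>) = \<bar>sc_c C t\<bar> powr (2 * a)"
    using c unfolding tt sc_c_def by (simp add: powr_def)
  finally show ?thesis unfolding rs .
qed

theorem theorem2p1:
  fixes n :: nat and C :: sconst and k :: real and \<delta> :: "nat \<Rightarrow> int"
    and as :: "(triple \<Rightarrow> real) list"
  assumes "nice_nilpotent n C"
    and "\<forall>i\<in>{1..n}. \<delta> i \<in> {0, 1}"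
    and "ker_basis n C as"
  shows "(\<exists>g. diag_metric n g \<and> (\<forall>i\<in>{1..n}. logsign (g i) = \<delta> i) \<and>
            (\<forall>y. (\<forall>h. h \<notin> {1..n} \<longrightarrow> y h = 0) \<longrightarrow>
                 ricci_op n C g y = (\<lambda>h. k / 2 * y h)))
     \<longleftrightarrow>
         (\<exists>X :: triple \<Rightarrow> real.
            (\<forall>l\<in>{1..n}. MT n C X l = k) \<and>
            (\<forall>t\<in>I_Delta n C. X t \<noteq> 0) \<and>
            (\<forall>t\<in>I_Delta n C. logsign (X t) = M2 n \<delta> t) \<and>
            (\<forall>\<alpha>\<in>set as. abspow (I_Delta n C) X \<alpha> =
                          abspow (I_Delta n C) (sc_c C) (\<lambda>t. 2 * \<alpha> t)))"
proof -
  note nn = assms(1)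
  from nn have L: "lie_sc n C" and Ni: "nice_sc n C" unfolding nice_nilpotent_def by auto
  let ?S = "{1..n::nat}"
  let ?I = "I_Delta n C"
  have finI: "finite ?I" by (rule I_Delta_finite[OF L Ni])
  have kb: "\<forall>\<alpha>\<in>set as. in_ker_MT n C \<alpha>"
    and span: "\<And>\<beta>. in_ker_MT n C \<beta> \<Longrightarrow> \<exists>a::nat \<Rightarrow> real. \<forall>t\<in>?I. \<beta> t = (\<Sum>q<length as. a q * (as ! q) t)"
    using assms(3) unfolding ker_basis_def by blast+
  have ric_iff: "(\<forall>y. (\<forall>h. h \<notin> ?S \<longrightarrow> y h = 0) \<longrightarrow> ricci_op n C g y = (\<lambda>h. k / 2 * y h))
      \<longleftrightarrow> (\<forall>h\<in>?S. MT n C (Xg C g) h = k)" if g: "\<forall>i\<in>?S. g i \<noteq> 0" for g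
  proof
    assume R: "\<forall>y. (\<forall>h. h \<notin> ?S \<longrightarrow> y h = 0) \<longrightarrow> ricci_op n C g y = (\<lambda>h. k / 2 * y h)"
    show "\<forall>h\<in>?S. MT n C (Xg C g) h = k"
    proof
      fix h assume h: "h \<in> ?S"
      have "\<forall>x. x \<notin> ?S \<longrightarrow> ev h x = 0" using h by (auto simp: ev_def)
      with R have "ricci_op n C g (ev h) h = k / 2 * ev h h" by metis
      then show "MT n C (Xg C g) h = k" unfolding ricci_formula[OF nn g h] by (simp add: ev_def)
    qed
  next
    assume M: "\<forall>h\<in>?S. MT n C (Xg C g) h = k"
    show "\<forall>y. (\<forall>h. h \<notin> ?S \<longrightarrow> y h = 0) \<longrightarrow> ricci_op n C g y = (\<lambda>h. k / 2 * y h)"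
    proof (intro allI impI ext)
      fix y :: "nat \<Rightarrow> real" and h assume y: "\<forall>h. h \<notin> ?S \<longrightarrow> y h = 0"
      show "ricci_op n C g y h = k / 2 * y h"
      proof (cases "h \<in> ?S")
        case True then show ?thesis unfolding ricci_formula[OF nn g True] using M by simp
      next
        case False
        then have "y h = 0" using y by blast
        moreover have "ricci_op n C g y h = 0" unfolding ricci_op_def using False by (simp only: if_False)
        ultimately show ?thesis by simp
      qed
    qed
  qed
  show ?thesis
  proof
    assume "\<exists>g. diag_metric n g \<and> (\<forall>i\<in>?S. logsign (g i) = \<delta> i) \<and>
            (\<forall>y. (\<forall>h. h \<notin> ?S \<longrightarrow> y h = 0) \<longrightarrow> ricci_op n C g y = (\<lambda>h. k / 2 * y h))"
    then obtain g where g: "\<forall>i\<in>?S. g i \<noteq> 0" and lg: "\<forall>i\<in>?S. logsign (g i) = \<delta> i"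
      and R: "\<forall>y. (\<forall>h. h \<notin> ?S \<longrightarrow> y h = 0) \<longrightarrow> ricci_op n C g y = (\<lambda>h. k / 2 * y h)"
      unfolding diag_metric_def by blast
    have M: "\<forall>h\<in>?S. MT n C (Xg C g) h = k" using R ric_iff[OF g] by blast
    have H: "\<forall>t\<in>?I. Xg C g t \<noteq> 0 \<and> logsign (Xg C g t) = M2 n \<delta> t"
    proof
      fix t assume t: "t \<in> ?I"
      obtain i j k where tt: "t = (i,j,k)" by (cases t) auto
      have c: "C i j k \<noteq> 0" using t tt I_Delta_eq[OF L Ni] by auto
      have r: "i \<in> ?S" "j \<in> ?S" "k \<in> ?S" using lie_out[OF L c] by auto
      have gi: "g i \<noteq> 0" and gj: "g j \<noteq> 0" and gk: "g k \<noteq> 0" using g r by auto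
      show "Xg C g t \<noteq> 0 \<and> logsign (Xg C g t) = M2 n \<delta> t"
        unfolding tt Xg_def XX_def M2_val[OF r] using sign_lemma[OF gi gj gk c] lg r c gi gj gk by simp
    qed
    have P: "abspow ?I (Xg C g) \<alpha> = abspow ?I (sc_c C) (\<lambda>t. 2 * \<alpha> t)" if a: "\<alpha> \<in> set as" for \<alpha>
    proof -
      have ker: "in_ker_MT n C \<alpha>" using kb a by blast
      have "abspow ?I (Xg C g) \<alpha> = (\<Prod>t\<in>?I. \<bar>sc_c C t\<bar> powr (2 * \<alpha> t) *
          exp (\<alpha> t * (\<Sum>l\<in>?S. of_int (root_entry t l) * ln \<bar>g l\<bar>)))"
        unfolding abspow_def by (intro prod.cong refl Xg_abspow_term[OF L Ni g])
      also have "\<dots> = abspow ?I (sc_c C) (\<lambda>t. 2 * \<alpha> t) *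
          exp (\<Sum>t\<in>?I. \<alpha> t * (\<Sum>l\<in>?S. of_int (root_entry t l) * ln \<bar>g l\<bar>))"
        unfolding abspow_def prod.distrib exp_sum[OF finI] ..
      also have "(\<Sum>t\<in>?I. \<alpha> t * (\<Sum>l\<in>?S. of_int (root_entry t l) * ln \<bar>g l\<bar>))
          = (\<Sum>l\<in>?S. ln \<bar>g l\<bar> * MT n C \<alpha> l)"
        unfolding MT_def sum_distrib_left by (subst sum.swap) (simp add: mult_ac)
      also have "\<dots> = 0" using ker unfolding in_ker_MT_def by simp
      finally show ?thesis by simp
    qed
    show "\<exists>X. (\<forall>l\<in>?S. MT n C X l = k) \<and> (\<forall>t\<in>?I. X t \<noteq> 0) \<and>
            (\<forall>t\<in>?I. logsign (X t) = M2 n \<delta> t) \<and>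
            (\<forall>\<alpha>\<in>set as. abspow ?I X \<alpha> = abspow ?I (sc_c C) (\<lambda>t. 2 * \<alpha> t))"
      using M H P by (intro exI[of _ "Xg C g"]) blast
  next
    assume "\<exists>X. (\<forall>l\<in>?S. MT n C X l = k) \<and> (\<forall>t\<in>?I. X t \<noteq> 0) \<and>
            (\<forall>t\<in>?I. logsign (X t) = M2 n \<delta> t) \<and>
            (\<forall>\<alpha>\<in>set as. abspow ?I X \<alpha> = abspow ?I (sc_c C) (\<lambda>t. 2 * \<alpha> t))"
    then obtain X where K: "\<forall>l\<in>?S. MT n C X l = k" and Hx: "\<forall>t\<in>?I. X t \<noteq> 0"
      and Lx: "\<forall>t\<in>?I. logsign (X t) = M2 n \<delta> t"
      and Px: "\<forall>\<alpha>\<in>set as. abspow ?I X \<alpha> = abspow ?I (sc_c C) (\<lambda>t. 2 * \<alpha> t)" by blast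
    have cnz: "sc_c C t \<noteq> 0" if "t \<in> ?I" for t
      using that I_Delta_eq[OF L Ni] by (auto simp: sc_c_def)
    define v where "v t = ln \<bar>X t\<bar> - 2 * ln \<bar>sc_c C t\<bar>" for t
    have va: "(\<Sum>t\<in>?I. \<alpha> t * v t) = 0" if a: "\<alpha> \<in> set as" for \<alpha>
    proof -
      have "ln (abspow ?I X \<alpha>) = ln (abspow ?I (sc_c C) (\<lambda>t. 2 * \<alpha> t))" using Px a by simp
      then have "(\<Sum>t\<in>?I. \<alpha> t * ln \<bar>X t\<bar>) = (\<Sum>t\<in>?I. 2 * \<alpha> t * ln \<bar>sc_c C t\<bar>)"
        unfolding abspow_def using Hx cnz by (simp add: ln_prod[OF finI])
      then show ?thesis unfolding v_def by (simp add: right_diff_distrib sum_subtractf mult_ac)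
    qed
    have vker: "(\<Sum>t\<in>?I. \<beta> t * v t) = 0" if kerb: "in_ker_MT n C \<beta>" for \<beta>
    proof -
      obtain a where a: "\<forall>t\<in>?I. \<beta> t = (\<Sum>q<length as. a q * (as ! q) t)" using span[OF kerb] by blast
      have "(\<Sum>t\<in>?I. \<beta> t * v t) = (\<Sum>t\<in>?I. \<Sum>q<length as. a q * ((as ! q) t * v t))"
        using a by (simp add: sum_distrib_right sum_distrib_left mult_ac)
      also have "\<dots> = (\<Sum>q<length as. a q * (\<Sum>t\<in>?I. (as ! q) t * v t))"
        by (subst sum.swap) (simp add: sum_distrib_left)
      also have "\<dots> = 0" using va by (simp add: nth_mem)
      finally show ?thesis .
    qed
    obtain w where w: "\<forall>t\<in>?I. v t = (\<Sum>l\<in>?S. of_int (root_entry t l) * w l)"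
    proof -
      have "\<exists>w. \<forall>t\<in>?I. v t = (\<Sum>l\<in>{1..n}. (\<lambda>t l. real_of_int (root_entry t l)) t l * w l)"
      proof (rule LA[OF finI])
        fix \<beta> :: "triple \<Rightarrow> real"
        assume "\<forall>t. t \<notin> ?I \<longrightarrow> \<beta> t = 0" "\<forall>l\<in>?S. (\<Sum>t\<in>?I. real_of_int (root_entry t l) * \<beta> t) = 0"
        then have "in_ker_MT n C \<beta>" unfolding in_ker_MT_def MT_def by blast
        then show "(\<Sum>t\<in>?I. \<beta> t * v t) = 0" by (rule vker)
      qed
      then show ?thesis using that by auto
    qed
    define g where "g l = (if \<delta> l = 0 then 1 else -1) * exp (w l)" for l
    have g: "\<forall>i\<in>?S. g i \<noteq> 0" unfolding g_def by simp
    have lg: "\<forall>i\<in>?S. logsign (g i) = \<delta> i"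
      using assms(2) unfolding g_def logsign_def by auto
    have XgX: "Xg C g t = X t" if t: "t \<in> ?I" for t
    proof -
      obtain i j k where tt: "t = (i,j,k)" by (cases t) auto
      have c: "C i j k \<noteq> 0" using t tt I_Delta_eq[OF L Ni] by auto
      have r: "i \<in> ?S" "j \<in> ?S" "k \<in> ?S" using lie_out[OF L c] by auto
      have gi: "g i \<noteq> 0" and gj: "g j \<noteq> 0" and gk: "g k \<noteq> 0" using g r by auto
      have vt: "v t = w k - w i - w j" using w t unfolding tt using root_sum[OF r, of w] by simp
      have Xt: "X t \<noteq> 0" using Hx t by blast
      have "\<bar>X t\<bar> = exp (ln \<bar>X t\<bar>)" using Xt by simp
      also have "ln \<bar>X t\<bar> = v t + 2 * ln \<bar>C i j k\<bar>" unfolding v_def tt sc_c_def by simp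
      also have "exp (v t + 2 * ln \<bar>C i j k\<bar>) = exp (w k) / (exp (w i) * exp (w j)) * \<bar>C i j k\<bar> ^ 2"
      proof -
        have "exp (v t + 2 * ln \<bar>C i j k\<bar>) = exp (w k - w i - w j) * exp (2 * ln \<bar>C i j k\<bar>)"
          unfolding vt by (rule exp_add)
        moreover have "exp (w k - w i - w j) = exp (w k) / (exp (w i) * exp (w j))"
          by (simp add: exp_diff)
        ultimately show ?thesis using exp2ln[OF c] by simp
      qed
      finally have aX: "\<bar>X t\<bar> = exp (w k) / (exp (w i) * exp (w j)) * \<bar>C i j k\<bar> ^ 2" .
      have aXg: "\<bar>Xg C g t\<bar> = exp (w k) / (exp (w i) * exp (w j)) * \<bar>C i j k\<bar> ^ 2"
        unfolding tt Xg_def XX_def g_def by (simp add: abs_mult power2_abs)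
      have "logsign (Xg C g t) = M2 n \<delta> t"
        unfolding tt Xg_def XX_def M2_val[OF r] using sign_lemma[OF gi gj gk c] lg r by simp
      then have "logsign (Xg C g t) = logsign (X t)" using Lx t by simp
      moreover have "Xg C g t \<noteq> 0" unfolding tt Xg_def XX_def using c gi gj gk by simp
      ultimately show ?thesis using logsign_eq[of "Xg C g t" "X t"] Xt aX aXg by simp
    qed
    have "\<forall>h\<in>?S. MT n C (Xg C g) h = k"
    proof
      fix h assume "h \<in> ?S"
      have "MT n C (Xg C g) h = MT n C X h" unfolding MT_def by (intro sum.cong refl) (simp add: XgX)
      then show "MT n C (Xg C g) h = k" using K \<open>h \<in> ?S\<close> by simp
    qed
    then have "\<forall>y. (\<forall>h. h \<notin> ?S \<longrightarrow> y h = 0) \<longrightarrow> ricci_op n C g y = (\<lambda>h. k / 2 * y h)"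
      using ric_iff[OF g] by blast
    then show "\<exists>g. diag_metric n g \<and> (\<forall>i\<in>?S. logsign (g i) = \<delta> i) \<and>
            (\<forall>y. (\<forall>h. h \<notin> ?S \<longrightarrow> y h = 0) \<longrightarrow> ricci_op n C g y = (\<lambda>h. k / 2 * y h))"
      using g lg unfolding diag_metric_def by blast
  qed
qed

end
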